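(* Let $C_0>c_0>0$ and $L>R>0$, and let $Q_L=\{(x,t):0<t<L^2,|x|<L\}$. Suppose $w$ satisfies in the viscosity sense $$\partial_tw-\mathcal P^+(D^2w)\le0\ \text{in }Q_L,\qquad w(x,0)\le c_0\ \text{on }\{t=0\},\qquad w\le C_0\ \text{in }\overline{Q_L}.$$ Then there is a constant $C$ depending only on $C_0,d,\Lambda$ such that $w(x,t)\le c_0+C\frac{R^2}{L^2}$ for $(x,t)\in\overline{Q_R}$.
   Context: $\mathcal P^+(M)=\Lambda\,\mathrm{Tr}M_+-\lambda\,\mathrm{Tr}M_-$ ($0<\lambda<\Lambda$) is Pucci's maximal operator on real symmetric $d\times d$ matrices, $M_\pm\ge0$ the positive and negative parts of $M$. *)

theory Defs
  imports "HOL-Analysis.Analysis"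
begin

definition symmetric_mat :: "real^'n^'n \<Rightarrow> bool" where
  "symmetric_mat M \<longleftrightarrow> transpose M = M"

definition psd_mat :: "real^'n^'n \<Rightarrow> bool" where
  "psd_mat M \<longleftrightarrow> symmetric_mat M \<and> (\<forall>v. v \<bullet> (M *v v) \<ge> 0)"

text \<open>Positive and negative parts: the unique decomposition M = M_+ - M_-
  with M_+, M_- positive semidefinite and M_+ M_- = 0.\<close>
definition pos_part_mat :: "real^'n^'n \<Rightarrow> real^'n^'n" where
  "pos_part_mat M = (THE P. psd_mat P \<and> psd_mat (P - M) \<and> P ** (P - M) = 0)"

definition neg_part_mat :: "real^'n^'n \<Rightarrow> real^'n^'n" where
  "neg_part_mat M = pos_part_mat M - M"

definition pucci_max :: "real \<Rightarrow> real \<Rightarrow> real^'n^'n \<Rightarrow> real" where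
  "pucci_max lam Lam M = Lam * trace (pos_part_mat M) - lam * trace (neg_part_mat M)"

definition cyl :: "real \<Rightarrow> ((real^'n) \<times> real) set" where
  "cyl L = {(x, t). 0 < t \<and> t < L\<^sup>2 \<and> norm x < L}"

definition usc_on :: "('a::metric_space) set \<Rightarrow> ('a \<Rightarrow> real) \<Rightarrow> bool" where
  "usc_on S f \<longleftrightarrow> (\<forall>p\<in>S. \<forall>e>0. \<exists>d>0. \<forall>q\<in>S. dist q p < d \<longrightarrow> f q < f p + e)"

definition visc_subsol ::
  "real \<Rightarrow> real \<Rightarrow> ((real^'n) \<times> real) set \<Rightarrow> (real^'n \<Rightarrow> real \<Rightarrow> real) \<Rightarrow> bool" where
  "visc_subsol lam Lam \<Omega> w \<longleftrightarrow>
     (\<forall>x0 t0 U (\<phi>::real^'n \<Rightarrow> real \<Rightarrow> real) \<phi>t D\<phi> D2\<phi>.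
        (x0, t0) \<in> \<Omega> \<and> open U \<and> (x0, t0) \<in> U \<and>
        (\<forall>(x, t)\<in>U. ((\<lambda>s. \<phi> x s) has_real_derivative \<phi>t x t) (at t)) \<and>
        (\<forall>(x, t)\<in>U. ((\<lambda>y. \<phi> y t) has_derivative (\<lambda>h. D\<phi> x t \<bullet> h)) (at x)) \<and>
        (\<forall>(x, t)\<in>U. ((\<lambda>y. D\<phi> y t) has_derivative (\<lambda>h. D2\<phi> x t *v h)) (at x)) \<and>
        (\<forall>(x, t)\<in>U. symmetric_mat (D2\<phi> x t)) \<and>
        continuous_on U (\<lambda>(x, t). \<phi> x t) \<and>
        continuous_on U (\<lambda>(x, t). \<phi>t x t) \<and>
        continuous_on U (\<lambda>(x, t). D\<phi> x t) \<and>
        continuous_on U (\<lambda>(x, t). D2\<phi> x t) \<and>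
        (\<forall>(x, t)\<in>U \<inter> \<Omega>. w x t - \<phi> x t \<le> w x0 t0 - \<phi> x0 t0)
        \<longrightarrow> \<phi>t x0 t0 - pucci_max lam Lam (D2\<phi> x0 t0) \<le> 0)"

end

theory Submission imports Defs begin


lemma mat_mulv: "(mat c :: real^'n^'n) *v h = c *\<^sub>R h"
  by (simp add: vec_eq_iff matrix_vector_mult_def mat_def if_distrib if_distribR sum.delta cong: if_cong)

lemma trace_mat: "trace (mat c :: real^'n^'n) = c * real CARD('n)"
  by (simp add: trace_def mat_def)

lemma inner_sym_mat:
  fixes N :: "real^'n^'n"
  assumes "symmetric_mat N"
  shows "v \<bullet> (N *v u) = (N *v v) \<bullet> u"
proof -
  have "v \<bullet> (N *v u) = (v v* N) \<bullet> u" by (simp add: dot_lmul_matrix)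
  also have "\<dots> = (transpose N *v v) \<bullet> u" by (simp only: transpose_matrix_vector)
  finally show ?thesis using assms by (simp only: symmetric_mat_def)
qed

lemma pos_part_mat_c:
  assumes c: "c \<ge> 0"
  shows "pos_part_mat (mat c :: real^'n^'n) = mat c"
  unfolding pos_part_mat_def
proof (rule the_equality)
  show "psd_mat (mat c :: real^'n^'n) \<and> psd_mat (mat c - mat c :: real^'n^'n) \<and> mat c ** (mat c - mat c :: real^'n^'n) = 0"
  proof -
    have "transpose (0::real^'n^'n) = 0" by (simp add: transpose_def vec_eq_iff)
    then show ?thesis using c by (simp add: psd_mat_def symmetric_mat_def mat_mulv)
  qed
next
  fix P :: "real^'n^'n"
  assume h: "psd_mat P \<and> psd_mat (P - mat c) \<and> P ** (P - mat c) = 0"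
  define N where "N = P - mat c"
  have PN: "P = N + mat c" by (simp add: N_def)
  have sN: "symmetric_mat N" and pN: "\<And>v. v \<bullet> (N *v v) \<ge> 0" using h by (auto simp: N_def psd_mat_def)
  have z: "P ** N = 0" using h by (simp add: N_def)
  have "\<forall>v. N *v v = 0 *v v"
  proof
    fix v :: "real^'n"
    have "0 = v \<bullet> ((P ** N) *v v)" using z by simp
    also have "\<dots> = v \<bullet> (N *v (N *v v)) + c * (v \<bullet> (N *v v))"
      by (simp add: PN matrix_vector_mul_assoc[symmetric] matrix_vector_mult_add_rdistrib mat_mulv inner_add_right)
    also have "v \<bullet> (N *v (N *v v)) = (N *v v) \<bullet> (N *v v)" using inner_sym_mat[OF sN] by simp
    finally have "(N *v v) \<bullet> (N *v v) + c * (v \<bullet> (N *v v)) = 0" by simp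
    moreover have "c * (v \<bullet> (N *v v)) \<ge> 0" using c pN by simp
    moreover have "(N *v v) \<bullet> (N *v v) \<ge> 0" by simp
    ultimately have "(N *v v) \<bullet> (N *v v) = 0" by linarith
    then show "N *v v = 0 *v v" by simp
  qed
  then have "N = 0" using matrix_eq by blast
  then show "P = mat c" by (simp add: PN)
qed

lemma pucci_mat:
  assumes "c \<ge> 0"
  shows "pucci_max lam Lam (mat c :: real^'n^'n) = Lam * c * real CARD('n)"
proof -
  have "trace (0::real^'n^'n) = 0" by (simp add: trace_def)
  then show ?thesis using assms by (simp add: pucci_max_def neg_part_mat_def pos_part_mat_c trace_mat)
qed



lemma usc_max:
  fixes f :: "'a::metric_space \<Rightarrow> real"
  assumes K: "compact K" "K \<noteq> {}" and u: "usc_on K f" and b: "\<And>q. q \<in> K \<Longrightarrow> f q \<le> B"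
  shows "\<exists>p\<in>K. \<forall>q\<in>K. f q \<le> f p"
proof (rule ccontr)
  assume na: "\<not> ?thesis"
  define s where "s = Sup (f ` K)"
  have bdd: "bdd_above (f ` K)" using b by (auto simp: bdd_above_def)
  have le: "f p \<le> s" if "p \<in> K" for p using that bdd by (auto simp: s_def intro: cSup_upper)
  have lt: "f p < s" if "p \<in> K" for p
  proof (rule ccontr)
    assume "\<not> f p < s"
    then have "f p = s" using le[OF that] by simp
    then show False using na that le by auto
  qed
  have "\<forall>p\<in>K. \<exists>d>0. \<forall>q\<in>K. dist q p < d \<longrightarrow> f q < f p + (s - f p)/2"
    using u lt unfolding usc_on_def by (auto)
  then obtain d where d: "\<And>p. p \<in> K \<Longrightarrow> d p > 0 \<and> (\<forall>q\<in>K. dist q p < d p \<longrightarrow> f q < f p + (s - f p)/2)"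
    by metis
  have "K \<subseteq> \<Union>((\<lambda>p. ball p (d p)) ` K)" using d by (auto intro!: bexI)
  then obtain D where D: "D \<subseteq> K" "finite D" "K \<subseteq> \<Union>((\<lambda>p. ball p (d p)) ` D)"
    using compactE_image[OF K(1), of K "\<lambda>p. ball p (d p)"] by auto
  have Dne: "D \<noteq> {}" using D K(2) by auto
  define m where "m = Max ((\<lambda>p. f p + (s - f p)/2) ` D)"
  have ms: "m < s"
  proof -
    have "m \<in> (\<lambda>p. f p + (s - f p)/2) ` D" unfolding m_def using D Dne by (intro Max_in) auto
    then obtain p where "p \<in> D" "m = f p + (s - f p)/2" by auto
    moreover have "f p < s" using lt[of p] D \<open>p \<in> D\<close> by auto
    ultimately show ?thesis by (simp add: field_simps)
  qed
  have "f q \<le> m" if qK: "q \<in> K" for q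
  proof -
    obtain p where p: "p \<in> D" "q \<in> ball p (d p)" using D(3) qK by blast
    then have "f q < f p + (s - f p)/2" using d[of p] D(1) qK by (auto simp: dist_commute)
    also have "\<dots> \<le> m" unfolding m_def using p D by (intro Max_ge) auto
    finally show ?thesis by simp
  qed
  then have "s \<le> m" unfolding s_def using K(2) by (intro cSup_least) auto
  with ms show False by simp
qed



lemma closure_cyl_sub: "closure (cyl L :: ((real^'n) \<times> real) set) \<subseteq> cball 0 L \<times> {0..L\<^sup>2}"
proof (rule closure_minimal)
  show "cyl L \<subseteq> cball (0::real^'n) L \<times> {0..L\<^sup>2}" by (auto simp: cyl_def)
  show "closed (cball (0::real^'n) L \<times> {0..L\<^sup>2})" by (intro closed_Times) auto
qed

lemma compact_closure_cyl: "compact (closure (cyl L :: ((real^'n) \<times> real) set))"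
  using closure_cyl_sub[of L]
  by (meson bounded_Times bounded_cball bounded_closed_interval bounded_subset closed_closure compact_eq_bounded_closed)

lemma psi_derivs:
  fixes a b k :: real
  shows "((\<lambda>s. a + b * (x \<bullet> x) + k * s) has_real_derivative k) (at t)"
    and "((\<lambda>y::real^'n. a + b * (y \<bullet> y) + k * t) has_derivative (\<lambda>h. ((2*b) *\<^sub>R x) \<bullet> h)) (at x)"
    and "((\<lambda>y::real^'n. (2*b) *\<^sub>R y) has_derivative (\<lambda>h. mat (2*b) *v h)) (at x)"
proof -
  show "((\<lambda>s. a + b * (x \<bullet> x) + k * s) has_real_derivative k) (at t)"
    by (auto intro!: derivative_eq_intros)
  show "((\<lambda>y::real^'n. a + b * (y \<bullet> y) + k * t) has_derivative (\<lambda>h. ((2*b) *\<^sub>R x) \<bullet> h)) (at x)"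
    by (auto intro!: derivative_eq_intros simp: inner_commute algebra_simps)
  show "((\<lambda>y::real^'n. (2*b) *\<^sub>R y) has_derivative (\<lambda>h. mat (2*b) *v h)) (at x)"
    by (auto intro!: derivative_eq_intros simp: mat_mulv)
qed



theorem lemma6p1:
  fixes C0 Lam :: real
  assumes "0 < C0" and "0 < Lam"
  shows "\<exists>C::real. \<forall>(lam::real) (c0::real) (L::real) (R::real) (w::real^'n \<Rightarrow> real \<Rightarrow> real).
           0 < lam \<and> lam < Lam \<and> 0 < c0 \<and> c0 < C0 \<and> 0 < R \<and> R < L \<and>
           usc_on (closure (cyl L)) (\<lambda>(x, t). w x t) \<and>
           visc_subsol lam Lam (cyl L) w \<and>
           (\<forall>x. (x, 0) \<in> closure (cyl L) \<longrightarrow> w x 0 \<le> c0) \<and>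
           (\<forall>(x, t)\<in>closure (cyl L). w x t \<le> C0)
           \<longrightarrow> (\<forall>(x, t)\<in>closure (cyl R). w x t \<le> c0 + C * R\<^sup>2 / L\<^sup>2)"
proof -
  define K where "K = 2 * Lam * C0 * real CARD('n) + C0 + 1"
  have K0: "K \<ge> C0 + 1" unfolding K_def using assms by simp
  show ?thesis
  proof (intro exI[of _ "C0 + K"] allI impI, elim conjE)
    fix lam c0 L R :: real and w :: "real^'n \<Rightarrow> real \<Rightarrow> real"
    assume lam: "0 < lam" "lam < Lam" and c0: "0 < c0" "c0 < C0" and RL: "0 < R" "R < L"
      and usc: "usc_on (closure (cyl L)) (\<lambda>(x, t). w x t)"
      and vs: "visc_subsol lam Lam (cyl L) w"
      and init: "\<forall>x. (x, 0) \<in> closure (cyl L) \<longrightarrow> w x 0 \<le> c0"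
      and bd: "\<forall>(x, t)\<in>closure (cyl L). w x t \<le> C0"
    have L0: "L > 0" "L\<^sup>2 > 0" using RL by auto
    define b where "b = C0 / L\<^sup>2"
    define k where "k = K / L\<^sup>2"
    have b0: "b > 0" and k0: "k > 0" using L0 assms K0 by (auto simp: b_def k_def)
    define psi where "psi = (\<lambda>(x::real^'n) (t::real). c0 + b * (x \<bullet> x) + k * t)"
    define f where "f = (\<lambda>(x, t). w x t - psi x t)"
    define S where "S = closure (cyl L :: ((real^'n) \<times> real) set)"
    have cS: "compact S" unfolding S_def by (rule compact_closure_cyl)
    have memS: "norm x \<le> L \<and> 0 \<le> t \<and> t \<le> L\<^sup>2" if "(x, t) \<in> S" for x t
      using closure_cyl_sub[of L] that unfolding S_def by auto
    have neS: "S \<noteq> {}"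
    proof -
      have "(0, L\<^sup>2/2) \<in> cyl L" using L0 by (auto simp: cyl_def)
      then show ?thesis unfolding S_def using closure_subset by blast
    qed
    have psi_ge: "psi x t \<ge> c0" if "t \<ge> 0" for x t
      using that b0 k0 by (auto simp: psi_def intro!: add_nonneg_nonneg mult_nonneg_nonneg)
    have fB: "f q \<le> C0 - c0" if "q \<in> S" for q
    proof -
      obtain x t where q: "q = (x, t)" by (cases q)
      have "w x t \<le> C0" using bd that q unfolding S_def by auto
      moreover have "c0 \<le> psi x t" using psi_ge memS that q by blast
      ultimately show ?thesis unfolding f_def q by simp
    qed
    have cpsi: "continuous_on UNIV (\<lambda>(x, t). psi x t)"
      unfolding psi_def by (auto intro!: continuous_intros simp: case_prod_unfold)
    have uf: "usc_on S f" unfolding usc_on_def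
    proof (intro ballI allI impI)
      fix p e assume pS: "p \<in> S" and e: "(e::real) > 0"
      obtain d1 where d1: "d1 > 0" "\<forall>q\<in>S. dist q p < d1 \<longrightarrow> (\<lambda>(x, t). w x t) q < (\<lambda>(x, t). w x t) p + e/2"
        using usc pS e unfolding usc_on_def S_def by (meson half_gt_zero)
      obtain d2 where d2: "d2 > 0" "\<forall>q. dist q p < d2 \<longrightarrow> dist ((\<lambda>(x, t). psi x t) q) ((\<lambda>(x, t). psi x t) p) < e/2"
        using cpsi e unfolding continuous_on_iff by (meson UNIV_I half_gt_zero)
      show "\<exists>d>0. \<forall>q\<in>S. dist q p < d \<longrightarrow> f q < f p + e"
      proof (intro exI[of _ "min d1 d2"] conjI ballI impI)
        show "min d1 d2 > 0" using d1 d2 by simp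
        fix q assume qS: "q \<in> S" and dq: "dist q p < min d1 d2"
        have "(\<lambda>(x, t). w x t) q < (\<lambda>(x, t). w x t) p + e/2" using d1(2) qS dq by auto
        moreover have "dist ((\<lambda>(x, t). psi x t) q) ((\<lambda>(x, t). psi x t) p) < e/2"
          using d2(2) dq by (metis min_less_iff_conj)
        moreover obtain a1 a2 where "p = (a1, a2)" by (cases p)
        moreover obtain b1 b2 where "q = (b1, b2)" by (cases q)
        ultimately show "f q < f p + e" unfolding f_def
          using abs_ge_minus_self[of "psi b1 b2 - psi a1 a2"] by (simp add: dist_real_def)
      qed
    qed
    obtain p where pS: "p \<in> S" and pmax: "\<forall>q\<in>S. f q \<le> f p"
      using usc_max[OF cS neS uf fB] by blast
    obtain x0 t0 where p: "p = (x0, t0)" by (cases p)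
    have fp: "f p \<le> 0"
    proof (rule ccontr)
      assume pos: "\<not> f p \<le> 0"
      then have pos': "w x0 t0 > psi x0 t0" unfolding f_def p by simp
      have m: "norm x0 \<le> L" "0 \<le> t0" "t0 \<le> L\<^sup>2" using memS pS p by auto
      have "t0 \<noteq> 0"
      proof
        assume "t0 = 0"
        then have "w x0 t0 \<le> c0" using init pS p unfolding S_def by auto
        then show False using pos' psi_ge[of t0 x0] m by simp
      qed
      moreover have "norm x0 \<noteq> L"
      proof
        assume nx: "norm x0 = L"
        have "x0 \<bullet> x0 = L\<^sup>2" using nx by (simp add: power2_norm_eq_inner[symmetric])
        then have "b * (x0 \<bullet> x0) = C0" unfolding b_def using L0 by simp
        then have "psi x0 t0 \<ge> c0 + C0" using k0 m unfolding psi_def by simp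
        moreover have "w x0 t0 \<le> C0" using bd pS p unfolding S_def by auto
        ultimately show False using pos' c0 by simp
      qed
      moreover have "t0 \<noteq> L\<^sup>2"
      proof
        assume "t0 = L\<^sup>2"
        then have "k * t0 = K" unfolding k_def using L0 by simp
        moreover have "b * (x0 \<bullet> x0) \<ge> 0" using b0 by simp
        ultimately have "psi x0 t0 \<ge> c0 + K" unfolding psi_def by simp
        moreover have "w x0 t0 \<le> C0" using bd pS p unfolding S_def by auto
        ultimately show False using pos' c0 K0 by simp
      qed
      ultimately have incyl: "(x0, t0) \<in> cyl L" using m by (auto simp: cyl_def)
      define M where "M = f p"
      define phi where "phi = (\<lambda>(x::real^'n) (t::real). (c0 + M) + b * (x \<bullet> x) + k * t)"
      have phipsi: "phi x t = psi x t + M" for x t unfolding phi_def psi_def by simp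
      define Dp where "Dp = (\<lambda>(x::real^'n) (t::real). (2*b) *\<^sub>R x)"
      define D2 where "D2 = (\<lambda>(x::real^'n) (t::real). mat (2*b) :: real^'n^'n)"
      define pt where "pt = (\<lambda>(x::real^'n) (t::real). k)"
      note G = vs[unfolded visc_subsol_def, THEN spec[of _ x0], THEN spec[of _ t0], THEN spec[of _ UNIV],
          THEN spec[of _ phi], THEN spec[of _ pt], THEN spec[of _ Dp], THEN spec[of _ D2]]
      have "pt x0 t0 - pucci_max lam Lam (D2 x0 t0) \<le> 0"
      proof (rule mp[OF G])
        show "(x0, t0) \<in> cyl L \<and> open UNIV \<and> (x0, t0) \<in> UNIV \<and>
          (\<forall>(x, t)\<in>UNIV. ((\<lambda>s. phi x s) has_real_derivative pt x t) (at t)) \<and>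
          (\<forall>(x, t)\<in>UNIV. ((\<lambda>y. phi y t) has_derivative (\<lambda>h. Dp x t \<bullet> h)) (at x)) \<and>
          (\<forall>(x, t)\<in>UNIV. ((\<lambda>y. Dp y t) has_derivative (\<lambda>h. D2 x t *v h)) (at x)) \<and>
          (\<forall>(x, t)\<in>UNIV. symmetric_mat (D2 x t)) \<and>
          continuous_on UNIV (\<lambda>(x, t). phi x t) \<and>
          continuous_on UNIV (\<lambda>(x::real^'n, t::real). pt x t) \<and>
          continuous_on UNIV (\<lambda>(x, t::real). Dp x t) \<and>
          continuous_on UNIV (\<lambda>(x::real^'n, t::real). D2 x t) \<and>
          (\<forall>(x, t)\<in>UNIV \<inter> cyl L. w x t - phi x t \<le> w x0 t0 - phi x0 t0)"
        proof (intro conjI)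
          show "\<forall>(x, t)\<in>UNIV. ((\<lambda>s. phi x s) has_real_derivative pt x t) (at t)"
            unfolding phi_def pt_def using psi_derivs(1) by auto
          show "\<forall>(x, t)\<in>UNIV. ((\<lambda>y. phi y t) has_derivative (\<lambda>h. Dp x t \<bullet> h)) (at x)"
            unfolding phi_def Dp_def using psi_derivs(2) by auto
          show "\<forall>(x, t)\<in>UNIV. ((\<lambda>y. Dp y t) has_derivative (\<lambda>h. D2 x t *v h)) (at x)"
            unfolding Dp_def D2_def using psi_derivs(3) by auto
          show "\<forall>(x, t)\<in>UNIV. symmetric_mat (D2 x t)"
            by (simp add: symmetric_mat_def D2_def)
          show "continuous_on UNIV (\<lambda>(x, t). phi x t)"
            unfolding phi_def by (auto intro!: continuous_intros simp: case_prod_unfold)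
          show "continuous_on UNIV (\<lambda>(x, t::real). Dp x t)"
            unfolding Dp_def by (auto intro!: continuous_intros simp: case_prod_unfold)
          show "\<forall>(x, t)\<in>UNIV \<inter> cyl L. w x t - phi x t \<le> w x0 t0 - phi x0 t0"
          proof clarify
            fix x :: "real^'n" and t :: real assume "(x, t) \<in> cyl L"
            then have "(x, t) \<in> S" unfolding S_def using closure_subset by blast
            then have "f (x, t) \<le> f p" using pmax by blast
            then show "w x t - phi x t \<le> w x0 t0 - phi x0 t0"
              unfolding phipsi M_def f_def p by simp
          qed
        qed (use incyl in \<open>auto simp: pt_def D2_def Dp_def\<close>)
      qed
      then have "k - Lam * (2*b) * real CARD('n) \<le> 0" using pucci_mat[of "2*b" lam Lam, where 'n='n] b0 by (simp add: pt_def D2_def)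
      moreover have "k - Lam * (2*b) * real CARD('n) = (C0 + 1) / L\<^sup>2"
        unfolding k_def b_def K_def using L0 by (simp add: field_simps)
      moreover have "(C0 + 1) / L\<^sup>2 > 0" using assms L0 by simp
      ultimately show False by simp
    qed
    show "\<forall>(x, t)\<in>closure (cyl R). w x t \<le> c0 + (C0 + K) * R\<^sup>2 / L\<^sup>2"
    proof clarify
      fix x :: "real^'n" and t :: real assume xt: "(x, t) \<in> closure (cyl R)"
      have "R\<^sup>2 < L\<^sup>2" using RL by (simp add: power_strict_mono)
      then have "cyl R \<subseteq> (cyl L :: ((real^'n) \<times> real) set)" using RL by (auto simp: cyl_def)
      then have "(x, t) \<in> S" unfolding S_def using xt closure_mono by blast
      then have "f (x, t) \<le> 0" using pmax fp by fastforce
      then have wle: "w x t \<le> psi x t" unfolding f_def by simp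
      have mR: "norm x \<le> R" "0 \<le> t" "t \<le> R\<^sup>2" using closure_cyl_sub[of R] xt by auto
      have "x \<bullet> x \<le> R\<^sup>2" using mR RL by (simp add: power2_norm_eq_inner[symmetric] power_mono)
      then have "b * (x \<bullet> x) \<le> C0 * R\<^sup>2 / L\<^sup>2" unfolding b_def using assms L0
        by (simp add: divide_right_mono mult_left_mono)
      moreover have "k * t \<le> K * R\<^sup>2 / L\<^sup>2" unfolding k_def using K0 assms L0 mR
        by (simp add: divide_right_mono mult_left_mono)
      ultimately have "psi x t \<le> c0 + (C0 + K) * R\<^sup>2 / L\<^sup>2" unfolding psi_def
        by (simp add: field_simps add_divide_distrib)
      with wle show "w x t \<le> c0 + (C0 + K) * R\<^sup>2 / L\<^sup>2" by simp
    qed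
  qed
qed

end
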